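(* Let $d=(d_1,\dots,d_n)$ be a weak composition, and let $\gamma=\gamma(d)$, $\mu=\mu(d)$. If $c_\beta\in\mathbb{Z}$ for the (finitely many) weak compositions $\beta$ with $x^\beta\prec x^\gamma$ appearing, then \[ m_\mu\cdot\Big(x^\gamma+\sum_{\beta\prec\gamma}c_\beta x^\beta\Big)=x^d+\sum_{x^e<_{ts}x^d}b_ex^e,\qquad b_e\in\mathbb{Z}. \]
   Context: For a weak composition $d$ of length $n$, $x^d=x_1^{d_1}\cdots x_n^{d_n}$ and $\lambda(d)$ is its weakly decreasing rearrangement. $x^\beta\prec x^e$ (also written $\beta\prec e$) means $\lambda(\beta)<_L\lambda(e)$ in lexicographic order; $x^d<_{ts}x^e$ means either $\lambda(d)<_L\lambda(e)$, or $\lambda(d)=\lambda(e)$ and $d<_Le$. The permutation $\sigma(d)$ labels the entries $d_1,\dots,d_n$ by $1,\dots,n$ from largest to smallest, ties broken left to right. The weak composition $\gamma(d)$: assign value $0$ to the position carrying label $n$; recursively, if the position carrying label $t$ has been assigned value $s$, assign to the position carrying label $t-1$ the value $s$ if that position is to the left of the position of $t$, and $s+1$ otherwise; $\gamma(d)_i$ is the value assigned to position $i$. Then $\mu(d)=d-\gamma(d)$ (componentwise). For example $d=(3,1,3,0,2,0)$ gives $\sigma(d)=(1,4,2,5,3,6)$, $\gamma(d)=(1,0,1,0,1,0)$, $\mu(d)=(2,1,2,0,1,0)$. $m_\mu$ is the sum of all distinct monomials in the $\mathfrak S_n$-orbit of $x^\mu$. *)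

theory Defs
  imports "HOL-Combinatorics.Permutations"
begin

text \<open>Weak compositions of length n are lists of naturals of length n (positions 0..n-1).
  Polynomials in x_1..x_n with integer coefficients are functions from exponent lists to int.\<close>

definition lam :: "nat list \<Rightarrow> nat list" where
  "lam d = rev (sort d)"

definition lex_less :: "nat list \<Rightarrow> nat list \<Rightarrow> bool" where
  "lex_less xs ys \<longleftrightarrow> (xs, ys) \<in> lexord {(a, b). a < b}"

definition prec :: "nat list \<Rightarrow> nat list \<Rightarrow> bool" where
  "prec b e \<longleftrightarrow> lex_less (lam b) (lam e)"

definition ts_less :: "nat list \<Rightarrow> nat list \<Rightarrow> bool" where
  "ts_less d e \<longleftrightarrow> lex_less (lam d) (lam e) \<or> (lam d = lam e \<and> lex_less d e)"

text \<open>sigma d i: label (1..n) of position i; largest entries first, ties left to right.\<close>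
definition sigma :: "nat list \<Rightarrow> nat \<Rightarrow> nat" where
  "sigma d i = 1 + card {j. j < length d \<and> d ! j > d ! i}
                 + card {j. j < i \<and> d ! j = d ! i}"

definition pos :: "nat list \<Rightarrow> nat \<Rightarrow> nat" where
  "pos d t = (THE i. i < length d \<and> sigma d i = t)"

text \<open>gval d k = value assigned to the position carrying label n - k.\<close>
fun gval :: "nat list \<Rightarrow> nat \<Rightarrow> nat" where
  "gval d 0 = 0"
| "gval d (Suc k) =
     (let t = length d - Suc k in
        if pos d t < pos d (t + 1) then gval d k else gval d k + 1)"

definition gamma :: "nat list \<Rightarrow> nat list" where
  "gamma d = map (\<lambda>i. gval d (length d - sigma d i)) [0..<length d]"

definition mu :: "nat list \<Rightarrow> nat list" where
  "mu d = map2 (-) d (gamma d)"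

definition mono :: "nat list \<Rightarrow> nat list \<Rightarrow> int" where
  "mono a e = (if e = a then 1 else 0)"

text \<open>Monomial symmetric function: sum of distinct monomials in the S_n-orbit of x^mu.\<close>
definition msym :: "nat list \<Rightarrow> nat list \<Rightarrow> int" where
  "msym m e = (if e \<in> {map (\<lambda>i. m ! p i) [0..<length m] | p. p permutes {..<length m}}
               then 1 else 0)"

definition pmult :: "(nat list \<Rightarrow> int) \<Rightarrow> (nat list \<Rightarrow> int) \<Rightarrow> nat list \<Rightarrow> int" where
  "pmult p q e = (\<Sum>(a, b) \<in> {(a, b). length a = length e \<and> length b = length e
                                 \<and> map2 (+) a b = e}. p a * q b)"

end

theory Submission
  imports Defs
begin


definition lexle :: "nat list \<Rightarrow> nat list \<Rightarrow> bool" where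
  "lexle x y \<longleftrightarrow> x = y \<or> lex_less x y"

lemma lam_mset: "mset xs = mset ys \<Longrightarrow> lam xs = lam ys"
  unfolding lam_def by (metis sorted_list_of_multiset_mset)

lemma length_lam[simp]: "length (lam xs) = length xs"
  by (simp add: lam_def)

lemma lam_Nil[simp]: "lam [] = []" by (simp add: lam_def)

lemma lam_max_map:
  fixes g :: "'a \<Rightarrow> nat"
  assumes "z \<in> set Z" "\<forall>w\<in>set Z. g w \<le> g z"
  shows "lam (map g Z) = g z # lam (map g (remove1 z Z))"
proof -
  have m: "mset (map g Z) = mset (map g (remove1 z Z) @ [g z])"
    using assms(1) by (simp add: mset_remove1 image_mset_Diff)
  have s: "sorted (sort (map g (remove1 z Z)) @ [g z])"
    using assms by (auto simp: sorted_append dest: set_remove1_subset[THEN subsetD])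
  have "sort (map g Z) = sort (map g (remove1 z Z)) @ [g z]"
    by (rule properties_for_sort) (use m s in auto)
  then show ?thesis by (simp add: lam_def)
qed


definition simord :: "(nat \<times> nat) list \<Rightarrow> bool" where
  "simord Z \<longleftrightarrow> (\<forall>p\<in>set Z. \<forall>q\<in>set Z. fst p > fst q \<longrightarrow> snd p \<ge> snd q)"

lemma lexle_Cons: "lexle xs ys \<Longrightarrow> lexle (x # xs) (x # ys)"
  by (auto simp: lexle_def lex_less_def)

lemma lam_pairs:
  "lexle (lam (map (\<lambda>p. fst p + snd p) Z)) (map2 (+) (lam (map fst Z)) (lam (map snd Z))) \<and>
   (lam (map (\<lambda>p. fst p + snd p) Z) = map2 (+) (lam (map fst Z)) (lam (map snd Z)) \<longleftrightarrow> simord Z)"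
proof (induction "length Z" arbitrary: Z rule: less_induct)
  case less
  show ?case
  proof (cases "Z = []")
    case True
    then show ?thesis by (simp add: lexle_def simord_def)
  next
    case False
    define f where "f = (\<lambda>p::nat\<times>nat. fst p + snd p)"
    obtain z where z: "z \<in> set Z" "\<forall>w\<in>set Z. f w \<le> f z"
    proof -
      have "Max (f ` set Z) \<in> f ` set Z" using False by (intro Max_in) auto
      then obtain z where "z \<in> set Z" "f z = Max (f ` set Z)" by auto
      then show ?thesis using that by auto
    qed
    obtain za where za: "za \<in> set Z" "\<forall>w\<in>set Z. fst w \<le> fst za"
    proof -
      have "Max (fst ` set Z) \<in> fst ` set Z" using False by (intro Max_in) auto
      then obtain z where "z \<in> set Z" "fst z = Max (fst ` set Z)" by auto
      then show ?thesis using that by auto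
    qed
    obtain zb where zb: "zb \<in> set Z" "\<forall>w\<in>set Z. snd w \<le> snd zb"
    proof -
      have "Max (snd ` set Z) \<in> snd ` set Z" using False by (intro Max_in) auto
      then obtain z where "z \<in> set Z" "snd z = Max (snd ` set Z)" by auto
      then show ?thesis using that by auto
    qed
    have LZ: "lam (map f Z) = f z # lam (map f (remove1 z Z))"
      by (rule lam_max_map) (use z in auto)
    have LA: "lam (map fst Z) = fst za # lam (map fst (remove1 za Z))"
      by (rule lam_max_map) (use za in auto)
    have LB: "lam (map snd Z) = snd zb # lam (map snd (remove1 zb Z))"
      by (rule lam_max_map) (use zb in auto)
    have le: "f z \<le> fst za + snd zb" using z za zb unfolding f_def by force
    show ?thesis
    proof (cases "f z < fst za + snd zb")
      case True
      have "lex_less (lam (map f Z)) (map2 (+) (lam (map fst Z)) (lam (map snd Z)))"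
        using True by (simp add: LZ LA LB lex_less_def)
      moreover have "\<not> simord Z"
      proof
        assume s: "simord Z"
        have "fst z = fst za"
        proof (rule ccontr)
          assume "fst z \<noteq> fst za"
          then have "fst za > fst z" using za z by force
          then have "snd za \<ge> snd z" using s za z unfolding simord_def by blast
          then show False using z za \<open>fst za > fst z\<close> unfolding f_def by force
        qed
        moreover have "snd z = snd zb"
        proof (rule ccontr)
          assume "snd z \<noteq> snd zb"
          then have "snd zb > snd z" using zb z by force
          moreover have "fst zb \<ge> fst z"
            using s zb z calculation unfolding simord_def by (meson not_le)
          ultimately show False using z zb unfolding f_def by force
        qed
        ultimately show False using True unfolding f_def by simp
      qed
      moreover have "\<not> lex_less x x" for x
        unfolding lex_less_def by (rule lexord_irreflexive) simp
      ultimately show ?thesis unfolding lexle_def f_def by metis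
    next
      case False
      with le have eq: "f z = fst za + snd zb" by simp
      have fz: "fst z = fst za" "snd z = snd zb" using eq z za zb unfolding f_def
        by (metis add_le_cancel_left add_le_cancel_right le_antisym)+
      have LA': "lam (map fst Z) = fst z # lam (map fst (remove1 z Z))"
        by (rule lam_max_map) (use z za fz in auto)
      have LB': "lam (map snd Z) = snd z # lam (map snd (remove1 z Z))"
        by (rule lam_max_map) (use z zb fz in auto)
      have "length (remove1 z Z) < length Z" using z(1) using length_pos_if_in_set[OF z(1)] by (simp add: length_remove1)
      note IH = less(1)[OF this]
      have sim: "simord Z \<longleftrightarrow> simord (remove1 z Z)"
      proof
        assume "simord Z" then show "simord (remove1 z Z)"
          unfolding simord_def by (meson set_remove1_subset subsetD)
      next
        assume s: "simord (remove1 z Z)"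
        show "simord Z" unfolding simord_def
        proof (intro ballI impI)
          fix p q assume p: "p \<in> set Z" and q: "q \<in> set Z" and pq: "fst q < fst p"
          show "snd q \<le> snd p"
          proof (cases "p = z")
            case True then show ?thesis using zb q fz by simp
          next
            case pz: False
            show ?thesis
            proof (cases "q = z")
              case True then show ?thesis using za p fz pq by force
            next
              case False
              then show ?thesis using s p q pz pq unfolding simord_def by (simp add: in_set_remove1)
            qed
          qed
        qed
      qed
      have R: "map2 (+) (lam (map fst Z)) (lam (map snd Z)) = f z # map2 (+) (lam (map fst (remove1 z Z))) (lam (map snd (remove1 z Z)))"
        unfolding LA' LB' f_def by (simp split: prod.split)
      have IH1: "lexle (lam (map f (remove1 z Z))) (map2 (+) (lam (map fst (remove1 z Z))) (lam (map snd (remove1 z Z))))"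
        and IH2: "lam (map f (remove1 z Z)) = map2 (+) (lam (map fst (remove1 z Z))) (lam (map snd (remove1 z Z))) \<longleftrightarrow> simord (remove1 z Z)"
        using IH unfolding f_def by blast+
      have "lexle (lam (map f Z)) (map2 (+) (lam (map fst Z)) (lam (map snd Z)))"
        unfolding LZ R by (rule lexle_Cons[OF IH1])
      moreover have "lam (map f Z) = map2 (+) (lam (map fst Z)) (lam (map snd Z)) \<longleftrightarrow> simord Z"
        unfolding LZ R using IH2 sim by simp
      ultimately show ?thesis unfolding f_def by blast
    qed
  qed
qed



lemma lam_add:
  assumes "length a = length b"
  shows "lexle (lam (map2 (+) a b)) (map2 (+) (lam a) (lam b)) \<and>
     (lam (map2 (+) a b) = map2 (+) (lam a) (lam b) \<longleftrightarrow>
       (\<forall>i<length a. \<forall>j<length a. a!i > a!j \<longrightarrow> b!i \<ge> b!j))"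
proof -
  have 1: "map (\<lambda>p. fst p + snd p) (zip a b) = map2 (+) a b" by (simp add: case_prod_beta)
  have 2: "simord (zip a b) \<longleftrightarrow> (\<forall>i<length a. \<forall>j<length a. a!i > a!j \<longrightarrow> b!i \<ge> b!j)"
    unfolding simord_def using assms by (auto simp: set_zip) blast
  show ?thesis using lam_pairs[of "zip a b"] assms unfolding 1 2 by simp
qed

lemma lex_less_add:
  "length w = length x \<Longrightarrow> length w = length y \<Longrightarrow> lex_less x y \<Longrightarrow> lex_less (map2 (+) w x) (map2 (+) w y)"
proof (induction w arbitrary: x y)
  case Nil then show ?case by (simp add: lex_less_def)
next
  case (Cons a w)
  then obtain u xs v ys where "x = u # xs" "y = v # ys" by (metis length_Suc_conv)
  with Cons show ?case by (auto simp: lex_less_def)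
qed

lemma lex_less_trans: "lex_less x y \<Longrightarrow> lex_less y z \<Longrightarrow> lex_less x z"
  unfolding lex_less_def by (erule lexord_trans) (auto simp: trans_def)

lemma lex_less_irrefl: "\<not> lex_less x x"
  unfolding lex_less_def by (rule lexord_irreflexive) simp

lemma lex_less_total: "lex_less x y \<or> x = y \<or> lex_less y x"
  unfolding lex_less_def by (rule lexord_linear) auto

definition R :: "nat list \<Rightarrow> nat \<Rightarrow> nat \<Rightarrow> bool" where
  "R d j i \<longleftrightarrow> d!j > d!i \<or> (d!j = d!i \<and> j < i)"

lemma sigma_eq: "i < length d \<Longrightarrow> sigma d i = 1 + card {j. j < length d \<and> R d j i}"
proof -
  assume i: "i < length d"
  have "{j. j < length d \<and> R d j i} = {j. j < length d \<and> d ! j > d ! i} \<union> {j. j < i \<and> d ! j = d ! i}"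
    using i unfolding R_def by auto
  moreover have "card ({j. j < length d \<and> d ! j > d ! i} \<union> {j. j < i \<and> d ! j = d ! i})
     = card {j. j < length d \<and> d ! j > d ! i} + card {j. j < i \<and> d ! j = d ! i}"
    by (rule card_Un_disjoint) auto
  ultimately show ?thesis unfolding sigma_def by simp
qed

lemma R_trans: "R d j i \<Longrightarrow> R d i k \<Longrightarrow> R d j k"
  unfolding R_def by auto

lemma sigma_less: "i < length d \<Longrightarrow> k < length d \<Longrightarrow> R d i k \<Longrightarrow> sigma d i < sigma d k"
proof -
  assume i: "i < length d" and k: "k < length d" and r: "R d i k"
  have "{j. j < length d \<and> R d j i} \<subset> {j. j < length d \<and> R d j k}"
  proof
    show "{j. j < length d \<and> R d j i} \<subseteq> {j. j < length d \<and> R d j k}" using r R_trans by blast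
    have "i \<notin> {j. j < length d \<and> R d j i}" by (simp add: R_def)
    moreover have "i \<in> {j. j < length d \<and> R d j k}" using i r by simp
    ultimately show "{j. j < length d \<and> R d j i} \<noteq> {j. j < length d \<and> R d j k}" by blast
  qed
  then have "card {j. j < length d \<and> R d j i} < card {j. j < length d \<and> R d j k}"
    by (rule psubset_card_mono[rotated]) simp
  then show ?thesis using sigma_eq[OF i] sigma_eq[OF k] by simp
qed

lemma R_total: "i \<noteq> k \<Longrightarrow> R d i k \<or> R d k i"
  unfolding R_def by auto

lemma sigma_less_iff: "i < length d \<Longrightarrow> k < length d \<Longrightarrow> sigma d i < sigma d k \<longleftrightarrow> R d i k"
  by (metis R_total sigma_less less_asym less_irrefl)

lemma sigma_inj: "i < length d \<Longrightarrow> k < length d \<Longrightarrow> sigma d i = sigma d k \<Longrightarrow> i = k"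
  by (metis R_total sigma_less less_irrefl)

lemma sigma_range: "i < length d \<Longrightarrow> 1 \<le> sigma d i \<and> sigma d i \<le> length d"
proof -
  assume i: "i < length d"
  have "{j. j < length d \<and> R d j i} \<subseteq> {..<length d} - {i}" by (auto simp: R_def)
  then have "card {j. j < length d \<and> R d j i} \<le> card ({..<length d} - {i})"
    by (intro card_mono) auto
  also have "\<dots> = length d - 1" using i by simp
  finally show ?thesis using sigma_eq[OF i] i by simp
qed

lemma sigma_image: "sigma d ` {..<length d} = {1..length d}"
proof -
  have inj: "inj_on (sigma d) {..<length d}" by (auto intro: inj_onI sigma_inj)
  have sub: "sigma d ` {..<length d} \<subseteq> {1..length d}" using sigma_range by auto
  have "card (sigma d ` {..<length d}) = card {1..length d}" using card_image[OF inj] by simp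
  then show ?thesis using sub by (intro card_subset_eq) auto
qed

lemma pos_sigma: "i < length d \<Longrightarrow> pos d (sigma d i) = i"
  unfolding pos_def by (rule the_equality) (auto intro: sigma_inj)

lemma pos_prop: "1 \<le> t \<Longrightarrow> t \<le> length d \<Longrightarrow> pos d t < length d \<and> sigma d (pos d t) = t"
proof -
  assume "1 \<le> t" "t \<le> length d"
  then have "t \<in> sigma d ` {..<length d}" using sigma_image by simp
  then obtain i where "i < length d" "t = sigma d i" by auto
  then show ?thesis using pos_sigma by simp
qed

definition G :: "nat list \<Rightarrow> nat \<Rightarrow> nat" where
  "G d t = gval d (length d - t)"

lemma G_n: "G d (length d) = 0" by (simp add: G_def)

lemma G_step: "1 \<le> t \<Longrightarrow> t < length d \<Longrightarrow>
   G d t = (if pos d t < pos d (t+1) then G d (t+1) else Suc (G d (t+1)))"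
proof -
  assume "1 \<le> t" "t < length d"
  then have e: "length d - t = Suc (length d - (t+1))" and e2: "length d - Suc (length d - (t+1)) = t" by auto
  show ?thesis unfolding G_def e gval.simps Let_def e2 by simp
qed

lemma step_facts:
  assumes "1 \<le> t" "t < length d"
  shows "G d (t+1) \<le> G d t \<and> G d t + d ! pos d (t+1) \<le> G d (t+1) + d ! pos d t
         \<and> (G d t = G d (t+1) \<longrightarrow> pos d t < pos d (t+1))"
proof -
  have p1: "pos d t < length d" "sigma d (pos d t) = t" using pos_prop[of t d] assms by auto
  have p2: "pos d (t+1) < length d" "sigma d (pos d (t+1)) = t+1" using pos_prop[of "t+1" d] assms by auto
  have r: "R d (pos d t) (pos d (t+1))" using sigma_less_iff[OF p1(1) p2(1)] p1 p2 by simp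
  have ne: "pos d t \<noteq> pos d (t+1)" using p1 p2 by auto
  show ?thesis
  proof (cases "pos d t < pos d (t+1)")
    case True
    then show ?thesis using G_step[OF assms] r unfolding R_def by auto
  next
    case False
    then have "d ! pos d t > d ! pos d (t+1)" using r ne unfolding R_def by auto
    then show ?thesis using G_step[OF assms] False by auto
  qed
qed

lemma G_le_d: "1 \<le> t \<Longrightarrow> t \<le> length d \<Longrightarrow> G d t \<le> d ! pos d t"
proof (induction "length d - t" arbitrary: t)
  case 0 then have "t = length d" by simp
  then show ?case by (simp add: G_n)
next
  case (Suc k)
  then have "G d (t+1) \<le> d ! pos d (t+1)" by auto
  moreover have "G d (t+1) \<le> G d t \<and> G d t + d ! pos d (t+1) \<le> G d (t+1) + d ! pos d t"
    using step_facts[of t d] Suc by auto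
  ultimately show ?case by linarith
qed

lemma G_mono:
  assumes "1 \<le> s" "s \<le> t" "t \<le> length d"
  shows "G d t \<le> G d s \<and> d ! pos d t - G d t \<le> d ! pos d s - G d s
         \<and> (G d s = G d t \<longrightarrow> pos d s \<le> pos d t)"
  using assms(2,3)
proof (induction t rule: dec_induct)
  case base then show ?case by simp
next
  case (step t)
  have st: "G d (t+1) \<le> G d t \<and> G d t + d ! pos d (t+1) \<le> G d (t+1) + d ! pos d t
         \<and> (G d t = G d (t+1) \<longrightarrow> pos d t < pos d (t+1))"
    using step_facts[of t d] step assms by auto
  have IH: "G d t \<le> G d s \<and> d ! pos d t - G d t \<le> d ! pos d s - G d s
         \<and> (G d s = G d t \<longrightarrow> pos d s \<le> pos d t)" using step by auto
  have g: "G d t \<le> d ! pos d t" using G_le_d[of t d] step assms by auto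
  show ?case using st IH g by auto
qed



lemma length_gamma[simp]: "length (gamma d) = length d" by (simp add: gamma_def)
lemma length_mu[simp]: "length (mu d) = length d" by (simp add: mu_def)

lemma gamma_nth: "i < length d \<Longrightarrow> gamma d ! i = G d (sigma d i)"
  by (simp add: gamma_def G_def)

lemma mu_nth: "i < length d \<Longrightarrow> mu d ! i = d ! i - gamma d ! i"
  by (simp add: mu_def)

lemma gamma_le: "i < length d \<Longrightarrow> gamma d ! i \<le> d ! i"
  using G_le_d[of "sigma d i" d] sigma_range[of i d] pos_sigma[of i d] by (simp add: gamma_nth)

lemma d_eq: "map2 (+) (mu d) (gamma d) = d"
  by (rule nth_equalityI) (auto simp: mu_nth gamma_le)

lemma pos_mono:
  assumes "i < length d" "k < length d" "sigma d i \<le> sigma d k"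
  shows "gamma d ! k \<le> gamma d ! i \<and> mu d ! k \<le> mu d ! i \<and> (gamma d ! i = gamma d ! k \<longrightarrow> i \<le> k)"
  using G_mono[of "sigma d i" "sigma d k" d] sigma_range[of i d] sigma_range[of k d] assms
    pos_sigma[of i d] pos_sigma[of k d]
  by (simp add: gamma_nth mu_nth)

lemma mu_gamma_sim: "i < length d \<Longrightarrow> j < length d \<Longrightarrow> mu d ! i > mu d ! j \<Longrightarrow> gamma d ! i \<ge> gamma d ! j"
proof -
  assume a: "i < length d" "j < length d" "mu d ! i > mu d ! j"
  have "sigma d i < sigma d j"
  proof (rule ccontr)
    assume "\<not> sigma d i < sigma d j"
    then have "mu d ! i \<le> mu d ! j" using pos_mono[of j d i] a by simp
    with a show False by simp
  qed
  then show ?thesis using pos_mono[of i d j] a by simp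
qed

lemma lam_d: "lam d = map2 (+) (lam (mu d)) (lam (gamma d))"
  using lam_add[of "mu d" "gamma d"] mu_gamma_sim[of _ d] d_eq[of d] by simp

lemma card_mset_eq:
  assumes "mset a = mset b"
  shows "card {j. j < length a \<and> P (a!j)} = card {j. j < length b \<and> P (b!j)}"
proof -
  have "length (filter P a) = length (filter P b)"
    by (metis assms mset_filter size_mset)
  then show ?thesis by (simp add: length_filter_conv_card)
qed

lemma key_eq:
  assumes len: "length a = length d" and ms: "mset a = mset (mu d)"
    and sim: "\<forall>i<length d. \<forall>j<length d. a!i > a!j \<longrightarrow> gamma d!i \<ge> gamma d!j"
    and ne: "a \<noteq> mu d"
  shows "lex_less (map2 (+) a (gamma d)) d"
proof -
  let ?n = "length d"
  have ex: "\<exists>i. i < ?n \<and> a!i \<noteq> mu d!i" using ne len by (metis length_mu nth_equalityI)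
  define i where "i = (LEAST i. i < ?n \<and> a!i \<noteq> mu d!i)"
  have i: "i < ?n" "a!i \<noteq> mu d!i" using LeastI_ex[OF ex] unfolding i_def by auto
  have before: "j < i \<Longrightarrow> a!j = mu d!j" for j
    using not_less_Least[of j "\<lambda>i. i < ?n \<and> a!i \<noteq> mu d!i"] i unfolding i_def[symmetric] by auto
  have lt: "a!i < mu d!i"
  proof (rule ccontr)
    assume "\<not> a!i < mu d!i"
    with i have gt: "mu d!i < a!i" by simp
    define W where "W = {j. j < ?n \<and> a!i \<le> mu d!j}"
    define U where "U = {j. j < ?n \<and> a!i \<le> a!j}"
    have cardeq: "card U = card W"
      unfolding U_def W_def using card_mset_eq[OF ms, of "\<lambda>x. a!i \<le> x"] len by simp
    have sub: "W \<subseteq> U"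
    proof
      fix j assume "j \<in> W"
      then have j: "j < ?n" "a!i \<le> mu d!j" unfolding W_def by auto
      with gt have mj: "mu d!i < mu d!j" by simp
      have sj: "sigma d j < sigma d i"
      proof (rule ccontr)
        assume "\<not> sigma d j < sigma d i"
        then have "mu d!j \<le> mu d!i" using pos_mono[of i d j] i j by simp
        with mj show False by simp
      qed
      have pm: "gamma d ! i \<le> gamma d ! j \<and> (gamma d ! j = gamma d ! i \<longrightarrow> j \<le> i)"
        using pos_mono[of j d i] i j sj by simp
      have "j \<noteq> i" using sj by auto
      show "j \<in> U"
      proof (cases "gamma d ! j = gamma d ! i")
        case True
        then have "j < i" using pm \<open>j \<noteq> i\<close> by auto
        then show ?thesis using before j unfolding U_def by simp
      next
        case False
        then have "gamma d ! i < gamma d ! j" using pm by simp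
        then have "a!i \<le> a!j" using sim i j by (meson not_le)
        then show ?thesis using j unfolding U_def by simp
      qed
    qed
    have "i \<in> U" "i \<notin> W" using i gt unfolding U_def W_def by auto
    then have "W \<subset> U" using sub by blast
    then have "card W < card U" by (rule psubset_card_mono[rotated]) (simp add: U_def)
    with cardeq show False by simp
  qed
  have tk: "take i (map2 (+) a (gamma d)) = take i (map2 (+) (mu d) (gamma d))"
    by (rule nth_equalityI) (use i len before in auto)
  show ?thesis
    unfolding lex_less_def lexord_take_index_conv
    apply (rule disjI2)
    apply (rule exI[of _ i])
    using i lt len tk d_eq[of d] by (auto simp: mu_nth)
qed


lemma finP: "finite {(a, b). length a = length e \<and> length b = length (e::nat list) \<and> map2 (+) a b = e}"
  (is "finite ?P")
proof -
  define S where "S = {xs. set xs \<subseteq> {..sum_list e} \<and> length xs = length e}"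
  have ae: "a!i + b!i = e!i" if "length a = length e" "length b = length e" "map2 (+) a b = e" "i < length e" for a b i
  proof -
    have "(map2 (+) a b)!i = a!i + b!i" using that(1,2,4) by simp
    then show ?thesis using that(3) by simp
  qed
  have es: "e!i \<le> sum_list e" if "i < length e" for i
    using that by (simp add: elem_le_sum_list)
  have inS: "a \<in> S" if "length a = length e" "\<And>i. i < length e \<Longrightarrow> a!i \<le> e!i" for a
  proof -
    have "set a \<subseteq> {..sum_list e}"
    proof
      fix y assume "y \<in> set a"
      then obtain i where "i < length a" "y = a!i" by (auto simp: in_set_conv_nth)
      then show "y \<in> {..sum_list e}" using that es[of i] by fastforce
    qed
    then show ?thesis unfolding S_def using that by simp
  qed
  have "?P \<subseteq> S \<times> S"
  proof
    fix x assume "x \<in> ?P"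
    then obtain a b where x: "x = (a, b)" and ab: "length a = length e" "length b = length e" "map2 (+) a b = e"
      by auto
    have le1: "a!i \<le> e!i" "b!i \<le> e!i" if "i < length e" for i
      using ae[OF ab that] by linarith+
    have "a \<in> S" by (rule inS) (use ab(1) le1 in blast)+
    moreover have "b \<in> S" by (rule inS) (use ab(2) le1 in blast)+
    ultimately show "x \<in> S \<times> S" unfolding x by simp
  qed
  moreover have "finite S" unfolding S_def by (rule finite_lists_length_eq) simp
  then have "finite (S \<times> S)" by simp
  ultimately show ?thesis by (rule finite_subset)
qed


lemma msym_nz:
  assumes "msym m a \<noteq> 0"
  shows "length a = length m \<and> mset a = mset m"
proof -
  from assms obtain p where p: "p permutes {..<length m}" and a: "a = map (\<lambda>i. m ! p i) [0..<length m]"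
    unfolding msym_def by (auto split: if_splits)
  have "mset a = image_mset (\<lambda>i. m ! p i) (mset_set {..<length m})"
    unfolding a by (simp add: mset_map atLeast0LessThan)
  also have "\<dots> = image_mset (nth m) (image_mset p (mset_set {..<length m}))"
    by (simp add: image_mset.compositionality comp_def)
  also have "\<dots> = image_mset (nth m) (mset_set {..<length m})"
    using permutes_image_mset[OF p] by simp
  also have "\<dots> = mset (map (nth m) [0..<length m])"
    by (simp add: mset_map atLeast0LessThan)
  also have "\<dots> = mset m" by (simp add: map_nth)
  finally show ?thesis using a by simp
qed

lemma msym_self: "msym m m = 1"
proof -
  have "\<exists>p. m = map (\<lambda>i. m ! p i) [0..<length m] \<and> p permutes {..<length m}"
    by (rule exI[of _ id]) (simp add: map_nth permutes_id)
  then show ?thesis unfolding msym_def by auto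
qed

theorem lemma4p3:
  fixes d :: "nat list" and c :: "nat list \<Rightarrow> int"
  defines "n \<equiv> length d"
  shows "\<exists>b :: nat list \<Rightarrow> int. \<forall>e. length e = n \<longrightarrow>
           pmult (msym (mu d))
                 (\<lambda>e. mono (gamma d) e
                      + (\<Sum>\<beta>\<in>{\<beta>. length \<beta> = n \<and> prec \<beta> (gamma d)}. c \<beta> * mono \<beta> e)) e
           = mono d e + (if ts_less e d then b e else 0)"
proof -
  define B where "B = {\<beta>. length \<beta> = n \<and> prec \<beta> (gamma d)}"
  define q where "q = (\<lambda>e. mono (gamma d) e + (\<Sum>\<beta>\<in>B. c \<beta> * mono \<beta> e))"
  have sum0: "(\<Sum>\<beta>\<in>B. c \<beta> * mono \<beta> x) = 0" if "x \<notin> B" for x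
    by (rule sum.neutral) (use that in \<open>auto simp: mono_def\<close>)
  have gB: "gamma d \<notin> B" unfolding B_def prec_def using lex_less_irrefl by simp
  have q_nz: "x = gamma d \<or> x \<in> B" if "q x \<noteq> 0" for x
    using that sum0[of x] unfolding q_def mono_def by (auto split: if_splits)
  have q_g: "q (gamma d) = 1" unfolding q_def using sum0[OF gB] by (simp add: mono_def)
  have main: "pmult (msym (mu d)) q e = mono d e" if e: "length e = n" "\<not> ts_less e d" for e
  proof -
    define P where "P = {(a, b). length a = length e \<and> length b = length e \<and> map2 (+) a b = e}"
    define f where "f = (\<lambda>(a, b). msym (mu d) a * q b)"
    have zero: "f x = 0" if "x \<in> P" "x \<noteq> (mu d, gamma d)" for x
    proof (rule ccontr)
      assume nz: "f x \<noteq> 0"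
      obtain a b where x: "x = (a, b)" by force
      have ab: "length a = n" "length b = n" "map2 (+) a b = e" using that(1) e unfolding P_def x by auto
      have ma: "msym (mu d) a \<noteq> 0" "q b \<noteq> 0" using nz unfolding f_def x by auto
      have am: "mset a = mset (mu d)" using msym_nz[OF ma(1)] by simp
      have la: "lam a = lam (mu d)" by (rule lam_mset[OF am])
      have LA: "lexle (lam e) (map2 (+) (lam (mu d)) (lam b)) \<and>
          (lam e = map2 (+) (lam (mu d)) (lam b) \<longleftrightarrow> (\<forall>i<length a. \<forall>j<length a. a!i > a!j \<longrightarrow> b!i \<ge> b!j))"
        using lam_add[of a b] ab la by simp
      have nl: "\<not> lex_less (lam e) (lam d)" using e(2) unfolding ts_less_def by simp
      from q_nz[OF ma(2)] show False
      proof
        assume bB: "b \<in> B"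
        then have "lex_less (lam b) (lam (gamma d))" unfolding B_def prec_def by simp
        moreover have "length (lam (mu d)) = length (lam b)" "length (lam (mu d)) = length (lam (gamma d))"
          using ab(2) unfolding n_def by simp_all
        ultimately have "lex_less (map2 (+) (lam (mu d)) (lam b)) (map2 (+) (lam (mu d)) (lam (gamma d)))"
          using lex_less_add by blast
        then have L1: "lex_less (map2 (+) (lam (mu d)) (lam b)) (lam d)" by (simp only: lam_d[of d])
        have L2: "lam e = map2 (+) (lam (mu d)) (lam b) \<or> lex_less (lam e) (map2 (+) (lam (mu d)) (lam b))"
          using LA unfolding lexle_def by blast
        have "lex_less (lam e) (lam d)"
        proof (cases "lam e = map2 (+) (lam (mu d)) (lam b)")
          case True then show ?thesis using L1 by simp
        next
          case False then show ?thesis using L1 L2 lex_less_trans by blast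
        qed
        with nl show False by simp
      next
        assume bg: "b = gamma d"
        have "lam e = map2 (+) (lam (mu d)) (lam (gamma d)) \<or> lex_less (lam e) (map2 (+) (lam (mu d)) (lam (gamma d)))"
          using LA bg unfolding lexle_def by blast
        then have "lam e = lam d" using nl unfolding lam_d[of d, symmetric] by blast
        then have sim: "\<forall>i<length d. \<forall>j<length d. a!i > a!j \<longrightarrow> gamma d!i \<ge> gamma d!j"
          using LA ab unfolding lam_d[of d] bg n_def by simp
        have "a \<noteq> mu d" using that(2) x bg by simp
        then have "lex_less e d" using key_eq[OF _ am sim] ab bg n_def by simp
        with e(2) \<open>lam e = lam d\<close> show False unfolding ts_less_def by simp
      qed
    qed
    have fin: "finite P" unfolding P_def by (rule finP)
    have "pmult (msym (mu d)) q e = sum f P" unfolding pmult_def P_def f_def by simp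
    also have "\<dots> = sum f (P \<inter> {(mu d, gamma d)})"
      by (rule sum.mono_neutral_right) (use fin zero in auto)
    also have "\<dots> = mono d e"
    proof (cases "e = d")
      case True
      then have "(mu d, gamma d) \<in> P" unfolding P_def using d_eq[of d] by simp
      then show ?thesis using True q_g msym_self[of "mu d"] by (simp add: f_def mono_def)
    next
      case False
      then have "(mu d, gamma d) \<notin> P" unfolding P_def using d_eq[of d] by auto
      then show ?thesis using False by (simp add: mono_def)
    qed
    finally show ?thesis .
  qed
  show ?thesis
    apply (rule exI[of _ "\<lambda>e. pmult (msym (mu d)) q e - mono d e"])
    using main unfolding q_def B_def by auto
qed


end
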